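(* Let $p$ be an odd prime, $G$ a finite non-abelian $p$-group, and $N$ a normal subgroup of $G$ with $C_G(N)\leq N$. Let $m$ be a positive integer with $d(Z(G))<m$. If $\mathrm{H}^1(G/N,\Omega_1(Z(N)))\cong\mathrm{F}_p^m$, then $G$ has a non-inner automorphism of order $p$.
   Context: $d(X)$ is the minimal number of generators of a group $X$; $\Omega_1(X)=\langle x\in X: x^p=1\rangle$; $\mathrm{F}_p$ is the field with $p$ elements. $G/N$ acts on $Z(N)$ (and on $\Omega_1(Z(N))$) via conjugation by $G$, making $\Omega_1(Z(N))$ an $\mathrm{F}_p(G/N)$-module; $\mathrm{H}^1(G/N,M)=\mathrm{Der}(G/N,M)/\mathrm{Ider}(G/N,M)$, where a derivation satisfies $\delta(xy)=\delta(x)^y\delta(y)$ and inner derivations are $\delta_h(g)=(h^{-1})^gh$. *)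

theory Defs
  imports "HOL-Algebra.Algebra"
begin

definition centralizer :: "('a, 'b) monoid_scheme \<Rightarrow> 'a set \<Rightarrow> 'a set" where
  "centralizer G S = {g \<in> carrier G. \<forall>s\<in>S. g \<otimes>\<^bsub>G\<^esub> s = s \<otimes>\<^bsub>G\<^esub> g}"

definition center :: "('a, 'b) monoid_scheme \<Rightarrow> 'a set" where
  "center G = centralizer G (carrier G)"

abbreviation subgrp :: "('a, 'b) monoid_scheme \<Rightarrow> 'a set \<Rightarrow> ('a, 'b) monoid_scheme" where
  "subgrp G H \<equiv> G\<lparr>carrier := H\<rparr>"

definition min_gens :: "('a, 'b) monoid_scheme \<Rightarrow> nat" where
  "min_gens K = Least (\<lambda>n. \<exists>S. S \<subseteq> carrier K \<and> finite S \<and> Finite_Set.card S = n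
                              \<and> generate K S = carrier K)"

definition Omega1 :: "('a, 'b) monoid_scheme \<Rightarrow> nat \<Rightarrow> 'a set" where
  "Omega1 K p = generate K {x \<in> carrier K. x [^]\<^bsub>K\<^esub> p = \<one>\<^bsub>K\<^esub>}"

definition p_group :: "('a, 'b) monoid_scheme \<Rightarrow> nat \<Rightarrow> bool" where
  "p_group G p \<longleftrightarrow> group G \<and> finite (carrier G) \<and> (\<exists>k. order G = p ^ k)"

(* Action of G/N on a subset M of Z(N) by conjugation: m^(Ng) = g^{-1} m g,
   computed via an arbitrary representative g of the coset X *)
definition qact :: "('a, 'b) monoid_scheme \<Rightarrow> 'a \<Rightarrow> 'a set \<Rightarrow> 'a" where
  "qact G m K = (let g = (SOME g. g \<in> K) in inv\<^bsub>G\<^esub> g \<otimes>\<^bsub>G\<^esub> m \<otimes>\<^bsub>G\<^esub> g)"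

definition Der :: "('a, 'b) monoid_scheme \<Rightarrow> 'a set \<Rightarrow> 'a set \<Rightarrow> ('a set \<Rightarrow> 'a) set" where
  "Der G N M = {\<delta>. \<delta> \<in> carrier (G Mod N) \<rightarrow>\<^sub>E M \<and>
     (\<forall>x\<in>carrier (G Mod N). \<forall>y\<in>carrier (G Mod N).
        \<delta> (x \<otimes>\<^bsub>G Mod N\<^esub> y) = qact G (\<delta> x) y \<otimes>\<^bsub>G\<^esub> \<delta> y)}"

definition Ider :: "('a, 'b) monoid_scheme \<Rightarrow> 'a set \<Rightarrow> 'a set \<Rightarrow> ('a set \<Rightarrow> 'a) set" where
  "Ider G N M = {\<delta>. \<exists>h\<in>M. \<delta> = (\<lambda>x\<in>carrier (G Mod N). qact G (inv\<^bsub>G\<^esub> h) x \<otimes>\<^bsub>G\<^esub> h)}"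

definition DerGroup :: "('a, 'b) monoid_scheme \<Rightarrow> 'a set \<Rightarrow> 'a set \<Rightarrow> ('a set \<Rightarrow> 'a) monoid" where
  "DerGroup G N M = \<lparr> carrier = Der G N M,
     monoid.mult = (\<lambda>\<delta> \<epsilon>. \<lambda>x\<in>carrier (G Mod N). \<delta> x \<otimes>\<^bsub>G\<^esub> \<epsilon> x),
     monoid.one = (\<lambda>x\<in>carrier (G Mod N). \<one>\<^bsub>G\<^esub>) \<rparr>"

definition H1 :: "('a, 'b) monoid_scheme \<Rightarrow> 'a set \<Rightarrow> 'a set \<Rightarrow> ('a set \<Rightarrow> 'a) set monoid" where
  "H1 G N M = DerGroup G N M Mod Ider G N M"

definition Fp_pow :: "nat \<Rightarrow> nat \<Rightarrow> (nat \<Rightarrow> nat) monoid" where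
  "Fp_pow p m = \<lparr> carrier = {..<m} \<rightarrow>\<^sub>E {..<p},
     monoid.mult = (\<lambda>f g. \<lambda>i\<in>{..<m}. (f i + g i) mod p),
     monoid.one = (\<lambda>i\<in>{..<m}. 0) \<rparr>"

definition inner_auto :: "('a, 'b) monoid_scheme \<Rightarrow> ('a \<Rightarrow> 'a) set" where
  "inner_auto G = {\<phi>. \<exists>g\<in>carrier G. \<phi> = (\<lambda>x\<in>carrier G. g \<otimes>\<^bsub>G\<^esub> x \<otimes>\<^bsub>G\<^esub> inv\<^bsub>G\<^esub> g)}"

end

theory Submission
  imports Defs
begin

lemma card_fibers:
  assumes "finite A"
  shows "card A = (\<Sum>y\<in>f ` A. card {x\<in>A. f x = y})"
proof -
  have "A = (\<Union>y\<in>f ` A. {x\<in>A. f x = y})" by auto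
  hence "card A = card (\<Union>y\<in>f ` A. {x\<in>A. f x = y})" by simp
  also have "\<dots> = (\<Sum>y\<in>f ` A. card {x\<in>A. f x = y})"
    by (rule card_UN_disjoint) (use assms in auto)
  finally show ?thesis .
qed

lemma card_fibers_le:
  assumes "finite A" "f ` A \<subseteq> B" "finite B" "\<And>y. y \<in> B \<Longrightarrow> card {x\<in>A. f x = y} \<le> k"
  shows "card A \<le> card B * k"
proof -
  have "card A = (\<Sum>y\<in>f ` A. card {x\<in>A. f x = y})" using card_fibers assms(1) .
  also have "\<dots> \<le> (\<Sum>y\<in>f ` A. k)" by (rule sum_mono) (use assms in auto)
  also have "\<dots> = card (f ` A) * k" by simp
  also have "\<dots> \<le> card B * k" using assms by (simp add: card_mono)
  finally show ?thesis .
qed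

lemma card_fibers_ge:
  assumes "finite A" "B \<subseteq> f ` A" "\<And>y. y \<in> B \<Longrightarrow> k \<le> card {x\<in>A. f x = y}"
  shows "card B * k \<le> card A"
proof -
  have "card B * k = (\<Sum>y\<in>B. k)" by simp
  also have "\<dots> \<le> (\<Sum>y\<in>B. card {x\<in>A. f x = y})" by (rule sum_mono) (use assms in auto)
  also have "\<dots> \<le> (\<Sum>y\<in>f ` A. card {x\<in>A. f x = y})"
    by (rule sum_mono2) (use assms in auto)
  also have "\<dots> = card A" using card_fibers assms(1) by metis
  finally show ?thesis .
qed

lemma (in comm_group) pow_image_subgroup:
  "subgroup ((\<lambda>x. x [^] (p::nat)) ` carrier G) G"
proof (rule subgroupI)
  show "(\<lambda>x. x [^] p) ` carrier G \<subseteq> carrier G" by auto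
  show "(\<lambda>x. x [^] p) ` carrier G \<noteq> {}" by auto
next
  fix a assume "a \<in> (\<lambda>x. x [^] p) ` carrier G"
  then obtain x where x: "x \<in> carrier G" "a = x [^] p" by auto
  have "inv a = (inv x) [^] p" using x by (simp add: nat_pow_inv)
  thus "inv a \<in> (\<lambda>x. x [^] p) ` carrier G" using x by auto
next
  fix a b assume "a \<in> (\<lambda>x. x [^] p) ` carrier G" "b \<in> (\<lambda>x. x [^] p) ` carrier G"
  then obtain x y where x: "x \<in> carrier G" "a = x [^] p" and y: "y \<in> carrier G" "b = y [^] p"
    by auto
  have "a \<otimes> b = (x \<otimes> y) [^] p" using x y by (simp add: pow_mult_distrib m_comm)
  thus "a \<otimes> b \<in> (\<lambda>x. x [^] p) ` carrier G" using x y by auto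
qed

lemma (in comm_group) ext_key:
  assumes H: "subgroup H G" and s: "s \<in> carrier G" and p: "p > (0::nat)" and sp: "s [^] p \<in> H"
    and h: "h \<in> H"
  shows "h \<otimes> s [^] (n::nat) \<in> (\<lambda>(h,i). h \<otimes> s [^] (i::nat)) ` (H \<times> {..<p})"
  using h
proof (induction n arbitrary: h rule: less_induct)
  case (less n)
  show ?case
  proof (cases "n < p")
    case True thus ?thesis using less(2) by (intro image_eqI[of _ _ "(h, n)"]) auto
  next
    case False
    have hc: "h \<in> carrier G" by (rule subgroup.mem_carrier[OF H less(2)])
    have nn: "p + (n - p) = n" using False by simp
    have sn: "s [^] n = s [^] p \<otimes> s [^] (n - p)"
      using nat_pow_mult[OF s, of p "n - p"] unfolding nn by simp
    have eq: "h \<otimes> s [^] n = (h \<otimes> s [^] p) \<otimes> s [^] (n - p)"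
      unfolding sn using hc s by (intro m_assoc[symmetric]) auto
    have hH: "h \<otimes> s [^] p \<in> H" by (rule subgroup.m_closed[OF H less(2) sp])
    have "n - p < n" using False p by auto
    from less(1)[OF this hH] show ?thesis unfolding eq .
  qed
qed

lemma (in comm_group) ext_subgroup:
  assumes H: "subgroup H G" and s: "s \<in> carrier G" and p: "p > (1::nat)" and sp: "\<And>x. x \<in> carrier G \<Longrightarrow> x [^] p \<in> H"
  shows "subgroup ((\<lambda>(h,i). h \<otimes> s [^] (i::nat)) ` (H \<times> {..<p})) G"
proof -
  define U where "U = (\<lambda>(h,i). h \<otimes> s [^] (i::nat)) ` (H \<times> {..<p})"
  have Hc: "H \<subseteq> carrier G" by (rule subgroup.subset[OF H])
  have key: "h \<otimes> s [^] n \<in> U" if "h \<in> H" for h and n :: nat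
    unfolding U_def by (rule ext_key[OF H s _ sp[OF s] that]) (use p in simp)
  have Umem: "\<exists>h i. h \<in> H \<and> x = h \<otimes> s [^] (i::nat)" if "x \<in> U" for x
    using that unfolding U_def by auto
  have "subgroup U G"
  proof (rule subgroupI)
    show "U \<subseteq> carrier G" unfolding U_def using Hc s by auto
    show "U \<noteq> {}" using key[OF subgroup.one_closed[OF H], of 0] by auto
  next
    fix a assume "a \<in> U"
    then obtain h and i :: nat where hi: "h \<in> H" "a = h \<otimes> s [^] i" using Umem by blast
    have hc: "h \<in> carrier G" using hi Hc by auto
    define b where "b = s [^] i"
    have bc: "b \<in> carrier G" unfolding b_def using s by simp
    have bp: "b [^] p \<in> H" using sp[OF bc] .
    have pp: "Suc (p - 1) = p" using p by simp
    have "b \<otimes> (b [^] (p - 1) \<otimes> inv (b [^] p)) = (b \<otimes> b [^] (p - 1)) \<otimes> inv (b [^] p)"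
      using bc by (simp add: m_assoc)
    also have "b \<otimes> b [^] (p - 1) = b [^] p"
      using nat_pow_Suc2[OF bc, of "p - 1"] unfolding pp by simp
    finally have "b \<otimes> (b [^] (p - 1) \<otimes> inv (b [^] p)) = \<one>" using bc by simp
    hence ib: "inv b = b [^] (p - 1) \<otimes> inv (b [^] p)"
      using bc by (intro inv_equality) (auto simp: m_comm)
    have bpow: "b [^] (p - 1) = s [^] (i * (p - 1))" unfolding b_def using s by (simp add: nat_pow_pow)
    have ia: "inv a = inv h \<otimes> inv b" using hi hc bc by (simp add: b_def inv_mult_group m_comm)
    have "inv a = (inv h \<otimes> inv (b [^] p)) \<otimes> s [^] (i * (p - 1))"
      unfolding ia ib bpow using hc bc s by (simp add: m_ac)
    moreover have "inv h \<otimes> inv (b [^] p) \<in> H"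
      by (rule subgroup.m_closed[OF H subgroup.m_inv_closed[OF H hi(1)] subgroup.m_inv_closed[OF H bp]])
    ultimately show "inv a \<in> U" using key by metis
  next
    fix a b assume "a \<in> U" "b \<in> U"
    then obtain h h' and i j :: nat where hi: "h \<in> H" "a = h \<otimes> s [^] i" "h' \<in> H" "b = h' \<otimes> s [^] j"
      using Umem by metis
    have hc: "h \<in> carrier G" "h' \<in> carrier G" using hi Hc by auto
    have "s [^] (i + j) = s [^] i \<otimes> s [^] j" using s by (simp add: nat_pow_mult)
    hence "a \<otimes> b = (h \<otimes> h') \<otimes> s [^] (i + j)"
      using hi hc s by (simp add: m_ac)
    moreover have "h \<otimes> h' \<in> H" by (rule subgroup.m_closed[OF H hi(1) hi(3)])
    ultimately show "a \<otimes> b \<in> U" using key by metis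
  qed
  thus ?thesis unfolding U_def .
qed

lemma (in comm_group) omega_bound:
  assumes fin: "finite (carrier G)" and p: "p > (1::nat)"
    and S: "S \<subseteq> carrier G" "finite S" "generate G S = carrier G"
  shows "card {x\<in>carrier G. x [^] p = \<one>} \<le> p ^ card S"
proof -
  define Q where "Q = (\<lambda>x. x [^] p) ` carrier G"
  have Qc: "Q \<subseteq> carrier G" unfolding Q_def by auto
  have Qsub: "subgroup Q G" unfolding Q_def by (rule pow_image_subgroup)
  have gQ: "generate G Q = Q"
  proof
    show "generate G Q \<subseteq> Q" by (rule generate_subgroup_incl[OF _ Qsub]) simp
    show "Q \<subseteq> generate G Q" using generate.incl[of _ Q G] by blast
  qed
  have step: "card (generate G (Q \<union> T)) \<le> card Q * p ^ card T"
    if "finite T" "T \<subseteq> carrier G" for T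
    using that
  proof (induction T rule: finite_induct)
    case empty
    then show ?case using gQ by simp
  next
    case (insert s T)
    define H where "H = generate G (Q \<union> T)"
    have sc: "s \<in> carrier G" using insert by auto
    have Hsub: "subgroup H G" unfolding H_def
      by (rule generate_is_subgroup) (use Qc insert in auto)
    have HQ: "Q \<subseteq> H" unfolding H_def using generate.incl[of _ "Q \<union> T" G] by blast
    have HT: "T \<subseteq> H" unfolding H_def using generate.incl[of _ "Q \<union> T" G] by blast
    have Hc: "H \<subseteq> carrier G" by (rule subgroup.subset[OF Hsub])
    have finH: "finite H" using Hc fin by (rule finite_subset)
    define U where "U = (\<lambda>(h,i). h \<otimes> s [^] (i::nat)) ` (H \<times> {..<p})"
    have Usub: "subgroup U G" unfolding U_def
      by (rule ext_subgroup[OF Hsub sc p]) (use HQ in \<open>auto simp: Q_def\<close>)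
    have "Q \<union> insert s T \<subseteq> U"
    proof
      fix x assume x: "x \<in> Q \<union> insert s T"
      show "x \<in> U"
      proof (cases "x = s")
        case True
        have "x = \<one> \<otimes> s [^] (1::nat)" using True sc by simp
        thus ?thesis using p subgroup.one_closed[OF Hsub] unfolding U_def
          by (intro image_eqI[of _ _ "(\<one>, 1)"]) auto
      next
        case False
        hence xH: "x \<in> H" using x HQ HT by auto
        moreover have "x = x \<otimes> s [^] (0::nat)" using xH Hc by auto
        ultimately show ?thesis using p unfolding U_def by (intro image_eqI[of _ _ "(x, 0)"]) auto
      qed
    qed
    hence "generate G (Q \<union> insert s T) \<subseteq> U" by (rule generate_subgroup_incl[OF _ Usub])
    moreover have "finite U" unfolding U_def using finH by simp
    ultimately have "card (generate G (Q \<union> insert s T)) \<le> card U"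
      by (simp add: card_mono)
    also have "\<dots> \<le> card (H \<times> {..<p})" unfolding U_def
      by (rule card_image_le) (simp add: finH)
    also have "\<dots> = card H * p" by (simp add: card_cartesian_product)
    also have "\<dots> \<le> card Q * p ^ card T * p" using insert.IH insert.prems unfolding H_def by simp
    also have "\<dots> = card Q * p ^ card (insert s T)" using insert by simp
    finally show ?case .
  qed
  have "carrier G \<subseteq> generate G (Q \<union> S)" using S mono_generate[of S "Q \<union> S"] by auto
  moreover have "generate G (Q \<union> S) \<subseteq> carrier G" using generate_incl Qc S by blast
  ultimately have "card (carrier G) \<le> card (generate G (Q \<union> S))"
    using fin by (metis card_mono finite_subset)
  also have "\<dots> \<le> card Q * p ^ card S" using step S by simp
  finally have up: "card (carrier G) \<le> card Q * p ^ card S" .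
  define \<Omega> where "\<Omega> = {x\<in>carrier G. x [^] p = \<one>}"
  have "card Q * card \<Omega> \<le> card (carrier G)"
  proof (rule card_fibers_ge[where f = "\<lambda>x. x [^] p"])
    show "finite (carrier G)" by (rule fin)
    show "Q \<subseteq> (\<lambda>x. x [^] p) ` carrier G" unfolding Q_def by simp
    fix y assume "y \<in> Q"
    then obtain x0 where x0: "x0 \<in> carrier G" "y = x0 [^] p" unfolding Q_def by auto
    have sub: "(\<lambda>w. x0 \<otimes> w) ` \<Omega> \<subseteq> {x \<in> carrier G. x [^] p = y}"
      using x0 by (auto simp: \<Omega>_def pow_mult_distrib m_comm)
    have inj: "inj_on (\<lambda>w. x0 \<otimes> w) \<Omega>" using x0 by (auto simp: inj_on_def \<Omega>_def)
    have "finite {x \<in> carrier G. x [^] p = y}" using fin by simp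
    hence "card ((\<lambda>w. x0 \<otimes> w) ` \<Omega>) \<le> card {x \<in> carrier G. x [^] p = y}"
      using sub card_mono by blast
    thus "card \<Omega> \<le> card {x \<in> carrier G. x [^] p = y}" using inj by (simp add: card_image)
  qed
  moreover have "card Q > 0"
  proof -
    have "finite Q" using Qc fin by (rule finite_subset)
    moreover have "Q \<noteq> {}" unfolding Q_def by auto
    ultimately show ?thesis by (simp add: card_gt_0_iff)
  qed
  ultimately show ?thesis using up unfolding \<Omega>_def
    by (metis le_trans mult_le_cancel1 not_less)
qed

locale lsetup = normal N G for N and G (structure) +
  fixes p :: nat
  assumes fin: "finite (carrier G)" and cent: "centralizer G N \<subseteq> N" and p1: "p > 1"
begin

definition "ZN = {g \<in> N. \<forall>s\<in>N. g \<otimes> s = s \<otimes> g}"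
definition "MM = {x \<in> ZN. x [^] p = \<one>}"
definition "ZG = centralizer G (carrier G)"
definition "com g a = inv g \<otimes> inv a \<otimes> g \<otimes> a"
definition "DD a = (\<lambda>K\<in>carrier (G Mod N). qact G (inv a) K \<otimes> a)"
definition "AA = {a \<in> ZN. \<forall>g\<in>carrier G. com g a \<in> MM}"
definition "phi \<delta> = (\<lambda>g\<in>carrier G. g \<otimes> \<delta> (N #> g))"

lemma Nsub: "subgroup N G" by (rule subgroup_axioms)
lemma Nc: "N \<subseteq> carrier G" by (rule subgroup.subset[OF Nsub])
lemma one_N: "\<one> \<in> N" by (rule subgroup.one_closed[OF Nsub])
lemma cancel_l: "g \<in> carrier G \<Longrightarrow> w \<in> carrier G \<Longrightarrow> g \<otimes> (inv g \<otimes> w) = w"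
  using m_assoc[of g "inv g" w] by simp
lemma cancel_l2: "g \<in> carrier G \<Longrightarrow> w \<in> carrier G \<Longrightarrow> inv g \<otimes> (g \<otimes> w) = w"
  using m_assoc[of "inv g" g w] by simp

lemma comm_inv: "x \<in> carrier G \<Longrightarrow> y \<in> carrier G \<Longrightarrow> x \<otimes> y = y \<otimes> x \<Longrightarrow> inv x \<otimes> y = y \<otimes> inv x"
proof -
  assume c: "x \<in> carrier G" "y \<in> carrier G" and e: "x \<otimes> y = y \<otimes> x"
  have "inv x \<otimes> y = inv x \<otimes> (y \<otimes> x) \<otimes> inv x" using c by (simp add: m_assoc)
  also have "\<dots> = inv x \<otimes> (x \<otimes> y) \<otimes> inv x" using e by simp
  also have "\<dots> = y \<otimes> inv x" using c by (simp add: m_assoc cancel_l2)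
  finally show ?thesis .
qed

lemma ZN_sub: "ZN \<subseteq> N" unfolding ZN_def by auto
lemma ZN_c: "x \<in> ZN \<Longrightarrow> x \<in> carrier G" using ZN_sub Nc by auto
lemma ZN_comm: "x \<in> ZN \<Longrightarrow> n \<in> N \<Longrightarrow> x \<otimes> n = n \<otimes> x" unfolding ZN_def by auto
lemma ZN_comm2: "x \<in> ZN \<Longrightarrow> y \<in> ZN \<Longrightarrow> x \<otimes> y = y \<otimes> x" using ZN_comm ZN_sub by auto
lemma ZN_lcomm: "x \<in> ZN \<Longrightarrow> y \<in> ZN \<Longrightarrow> w \<in> carrier G \<Longrightarrow> x \<otimes> (y \<otimes> w) = y \<otimes> (x \<otimes> w)"
  using ZN_comm2 ZN_c by (metis m_assoc)

lemma ZN_subgroup: "subgroup ZN G"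
proof (rule subgroupI)
  show "ZN \<subseteq> carrier G" using ZN_c by auto
  have "\<one> \<in> ZN" unfolding ZN_def using one_N Nc by auto
  thus "ZN \<noteq> {}" by auto
next
  fix a assume a: "a \<in> ZN"
  hence ac: "a \<in> carrier G" "a \<in> N" using ZN_c ZN_sub by auto
  have "\<forall>s\<in>N. inv a \<otimes> s = s \<otimes> inv a"
  proof
    fix s assume s: "s \<in> N"
    hence sc: "s \<in> carrier G" using Nc by auto
    have "a \<otimes> s = s \<otimes> a" using ZN_comm a s by auto
    thus "inv a \<otimes> s = s \<otimes> inv a" using comm_inv ac sc by blast
  qed
  thus "inv a \<in> ZN" unfolding ZN_def using ac by (simp add: m_inv_closed)
next
  fix a b assume a: "a \<in> ZN" and b: "b \<in> ZN"
  hence c: "a \<in> carrier G" "b \<in> carrier G" "a \<in> N" "b \<in> N" using ZN_c ZN_sub by auto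
  have "\<forall>s\<in>N. a \<otimes> b \<otimes> s = s \<otimes> (a \<otimes> b)"
  proof
    fix s assume s: "s \<in> N"
    hence sc: "s \<in> carrier G" using Nc by auto
    have "a \<otimes> b \<otimes> s = a \<otimes> (s \<otimes> b)" using ZN_comm[OF b s] c sc by (simp add: m_assoc)
    also have "\<dots> = (s \<otimes> a) \<otimes> b" using ZN_comm[OF a s] c sc by (simp add: m_assoc[symmetric])
    finally show "a \<otimes> b \<otimes> s = s \<otimes> (a \<otimes> b)" using c sc by (simp add: m_assoc)
  qed
  thus "a \<otimes> b \<in> ZN" unfolding ZN_def using c by (simp add: m_closed)
qed

lemma conj_pow: "g \<in> carrier G \<Longrightarrow> x \<in> carrier G \<Longrightarrow> (inv g \<otimes> x \<otimes> g) [^] (n::nat) = inv g \<otimes> x [^] n \<otimes> g"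
proof (induction n)
  case 0 then show ?case by simp
next
  case (Suc n)
  have "(inv g \<otimes> x \<otimes> g) [^] Suc n = (inv g \<otimes> x [^] n \<otimes> g) \<otimes> (inv g \<otimes> x \<otimes> g)"
    using Suc by simp
  also have "\<dots> = inv g \<otimes> (x [^] n \<otimes> x) \<otimes> g" using Suc.prems by (simp add: m_assoc cancel_l)
  finally show ?case by simp
qed

lemma ZN_conj: "g \<in> carrier G \<Longrightarrow> z \<in> ZN \<Longrightarrow> inv g \<otimes> z \<otimes> g \<in> ZN"
proof -
  assume g: "g \<in> carrier G" and z: "z \<in> ZN"
  hence zc: "z \<in> carrier G" "z \<in> N" using ZN_c ZN_sub by auto
  have inN: "inv g \<otimes> z \<otimes> g \<in> N" using inv_op_closed1 g zc by auto
  have "\<forall>s\<in>N. inv g \<otimes> z \<otimes> g \<otimes> s = s \<otimes> (inv g \<otimes> z \<otimes> g)"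
  proof
    fix s assume s: "s \<in> N"
    hence sc: "s \<in> carrier G" using Nc by auto
    have gs: "g \<otimes> s \<otimes> inv g \<in> N" using inv_op_closed2 g s by auto
    hence com1: "z \<otimes> (g \<otimes> s \<otimes> inv g) = (g \<otimes> s \<otimes> inv g) \<otimes> z" using ZN_comm z by auto
    have "inv g \<otimes> z \<otimes> g \<otimes> s = inv g \<otimes> (z \<otimes> (g \<otimes> s \<otimes> inv g)) \<otimes> g"
      using g sc zc by (simp add: m_assoc)
    also have "\<dots> = inv g \<otimes> ((g \<otimes> s \<otimes> inv g) \<otimes> z) \<otimes> g" using com1 by simp
    also have "\<dots> = s \<otimes> (inv g \<otimes> z \<otimes> g)" using g sc zc by (simp add: m_assoc cancel_l cancel_l2)
    finally show "inv g \<otimes> z \<otimes> g \<otimes> s = s \<otimes> (inv g \<otimes> z \<otimes> g)" .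
  qed
  thus ?thesis unfolding ZN_def using inN by simp
qed

lemma MM_sub: "MM \<subseteq> ZN" unfolding MM_def by auto
lemma MM_pow: "x \<in> MM \<Longrightarrow> x [^] p = \<one>" unfolding MM_def by auto
lemma MM_c: "x \<in> MM \<Longrightarrow> x \<in> carrier G" using MM_sub ZN_c by auto

lemma MM_subgroup: "subgroup MM G"
proof (rule subgroupI)
  show "MM \<subseteq> carrier G" using MM_c by auto
  show "MM \<noteq> {}" unfolding MM_def using subgroup.one_closed[OF ZN_subgroup] by auto
next
  fix a assume a: "a \<in> MM"
  thus "inv a \<in> MM" unfolding MM_def
    using subgroup.m_inv_closed[OF ZN_subgroup] ZN_c by (auto simp: nat_pow_inv)
next
  fix a b assume a: "a \<in> MM" and b: "b \<in> MM"
  have ab: "a \<in> ZN" "b \<in> ZN" using a b MM_sub by auto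
  have "(a \<otimes> b) [^] p = a [^] p \<otimes> b [^] p"
    by (rule pow_mult_distrib[OF ZN_comm2[OF ab] ZN_c[OF ab(1)] ZN_c[OF ab(2)]])
  thus "a \<otimes> b \<in> MM" using a b unfolding MM_def
    using subgroup.m_closed[OF ZN_subgroup] by auto
qed

lemma MM_conj: "g \<in> carrier G \<Longrightarrow> x \<in> MM \<Longrightarrow> inv g \<otimes> x \<otimes> g \<in> MM"
  unfolding MM_def using ZN_conj conj_pow ZN_c by auto

lemma Omega1_eq: "Omega1 (G\<lparr>carrier := ZN\<rparr>) p = MM"
proof -
  have e: "{x \<in> carrier (G\<lparr>carrier := ZN\<rparr>). x [^]\<^bsub>G\<lparr>carrier := ZN\<rparr>\<^esub> p = \<one>\<^bsub>G\<lparr>carrier := ZN\<rparr>\<^esub>} = MM"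
    unfolding MM_def by (simp add: nat_pow_consistent[symmetric])
  have "generate (G\<lparr>carrier := ZN\<rparr>) MM = generate G MM"
    by (rule generate_consistent[OF MM_sub ZN_subgroup])
  also have "\<dots> = MM"
  proof
    show "generate G MM \<subseteq> MM" by (rule generate_subgroup_incl[OF _ MM_subgroup]) simp
    show "MM \<subseteq> generate G MM" using generate.incl[of _ MM G] by blast
  qed
  finally show ?thesis unfolding Omega1_def e .
qed

lemma center_N: "center (G\<lparr>carrier := N\<rparr>) = ZN"
  unfolding center_def centralizer_def ZN_def by simp

lemma ZG_sub: "ZG \<subseteq> ZN"
proof
  fix z assume z: "z \<in> ZG"
  hence "z \<in> centralizer G N" unfolding ZG_def centralizer_def using Nc by auto
  hence "z \<in> N" using cent by auto
  thus "z \<in> ZN" using z Nc unfolding ZN_def ZG_def centralizer_def by auto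
qed
lemma ZG_c: "z \<in> ZG \<Longrightarrow> z \<in> carrier G" using ZG_sub ZN_c by auto
lemma ZG_comm: "z \<in> ZG \<Longrightarrow> x \<in> carrier G \<Longrightarrow> z \<otimes> x = x \<otimes> z" unfolding ZG_def centralizer_def by auto

lemma ZG_subgroup: "subgroup ZG G"
proof (rule subgroupI)
  show "ZG \<subseteq> carrier G" using ZG_c by auto
  show "ZG \<noteq> {}" unfolding ZG_def centralizer_def by (auto intro!: exI[of _ \<one>])
next
  fix a assume a: "a \<in> ZG"
  hence ac: "a \<in> carrier G" using ZG_c by auto
  have "\<forall>s\<in>carrier G. inv a \<otimes> s = s \<otimes> inv a"
    using ZG_comm[OF a] ac comm_inv by auto
  thus "inv a \<in> ZG" unfolding ZG_def centralizer_def using ac by simp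
next
  fix a b assume a: "a \<in> ZG" and b: "b \<in> ZG"
  hence c: "a \<in> carrier G" "b \<in> carrier G" using ZG_c by auto
  have "\<forall>s\<in>carrier G. a \<otimes> b \<otimes> s = s \<otimes> (a \<otimes> b)"
  proof
    fix s assume sc: "s \<in> carrier G"
    have "a \<otimes> b \<otimes> s = a \<otimes> (s \<otimes> b)" using ZG_comm[OF b sc] c sc by (simp add: m_assoc)
    also have "\<dots> = (s \<otimes> a) \<otimes> b" using ZG_comm[OF a sc] c sc by (simp add: m_assoc[symmetric])
    finally show "a \<otimes> b \<otimes> s = s \<otimes> (a \<otimes> b)" using c sc by (simp add: m_assoc)
  qed
  thus "a \<otimes> b \<in> ZG" unfolding ZG_def centralizer_def using c by simp
qed

end

context lsetup begin

lemma rc: "g \<in> carrier G \<Longrightarrow> N #> g \<in> carrier (G Mod N)"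
  unfolding FactGroup_def using rcosetsI[OF Nc] by simp

lemma rc_cases: "K \<in> carrier (G Mod N) \<Longrightarrow> \<exists>g\<in>carrier G. K = N #> g"
  unfolding FactGroup_def RCOSETS_def by auto

lemma rc_mult: "g \<in> carrier G \<Longrightarrow> h \<in> carrier G \<Longrightarrow> (N #> g) \<otimes>\<^bsub>G Mod N\<^esub> (N #> h) = N #> (g \<otimes> h)"
  by (simp add: rcos_sum)

lemma rc_N: "n \<in> N \<Longrightarrow> N #> n = N"
  by (rule coset_join2[OF _ Nsub]) (use Nc in auto)

lemma rc_mulN: "g \<in> carrier G \<Longrightarrow> n \<in> N \<Longrightarrow> N #> (g \<otimes> n) = N #> g"
proof -
  assume g: "g \<in> carrier G" and n: "n \<in> N"
  have nc: "n \<in> carrier G" using n Nc by auto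
  have "g \<otimes> n \<otimes> inv g \<in> N" using inv_op_closed2[OF g n] .
  hence "g \<otimes> n \<in> N #> g"
    using subgroup.rcos_module_rev[OF Nsub is_group g] g nc by auto
  thus ?thesis using repr_independence[OF _ g Nsub] by auto
qed

lemma qact_eq: "z \<in> ZN \<Longrightarrow> g \<in> carrier G \<Longrightarrow> qact G z (N #> g) = inv g \<otimes> z \<otimes> g"
proof -
  assume z: "z \<in> ZN" and g: "g \<in> carrier G"
  have zc: "z \<in> carrier G" using ZN_c[OF z] .
  define g' where "g' = (SOME x. x \<in> N #> g)"
  have "g \<in> N #> g" by (rule rcos_self[OF g Nsub])
  hence g'in: "g' \<in> N #> g" unfolding g'_def by (rule someI)
  have g'c: "g' \<in> carrier G" using g'in g Nc by (auto simp: r_coset_def)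
  define n where "n = g' \<otimes> inv g"
  have n: "n \<in> N" unfolding n_def using subgroup.rcos_module_imp[OF Nsub is_group g g'in] .
  have nc: "n \<in> carrier G" using n Nc by auto
  have g'e: "g' = n \<otimes> g" unfolding n_def using g g'c by (simp add: m_assoc)
  have zn: "z \<otimes> (n \<otimes> g) = n \<otimes> (z \<otimes> g)"
    using ZN_comm[OF z n] zc nc g by (simp add: m_assoc[symmetric])
  have "qact G z (N #> g) = inv g' \<otimes> z \<otimes> g'" unfolding qact_def g'_def Let_def ..
  also have "\<dots> = inv g \<otimes> inv n \<otimes> z \<otimes> (n \<otimes> g)" unfolding g'e using nc g by (simp add: inv_mult_group)
  also have "\<dots> = inv g \<otimes> z \<otimes> g" using nc g zc by (simp add: m_assoc zn cancel_l2)
  finally show ?thesis .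
qed

lemma Der_PiE: "\<delta> \<in> Der G N MM \<Longrightarrow> \<delta> \<in> carrier (G Mod N) \<rightarrow>\<^sub>E MM"
  unfolding Der_def by auto

lemma Der_val: "\<delta> \<in> Der G N MM \<Longrightarrow> g \<in> carrier G \<Longrightarrow> \<delta> (N #> g) \<in> MM"
  using Der_PiE rc by (metis PiE_mem)

lemma Der_valc: "\<delta> \<in> Der G N MM \<Longrightarrow> g \<in> carrier G \<Longrightarrow> \<delta> (N #> g) \<in> carrier G"
  using Der_val MM_c by blast

lemma Der_mult: "\<delta> \<in> Der G N MM \<Longrightarrow> g \<in> carrier G \<Longrightarrow> h \<in> carrier G \<Longrightarrow>
   \<delta> (N #> (g \<otimes> h)) = inv h \<otimes> \<delta> (N #> g) \<otimes> h \<otimes> \<delta> (N #> h)"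
proof -
  assume d: "\<delta> \<in> Der G N MM" and g: "g \<in> carrier G" and h: "h \<in> carrier G"
  have "\<delta> ((N #> g) \<otimes>\<^bsub>G Mod N\<^esub> (N #> h)) = qact G (\<delta> (N #> g)) (N #> h) \<otimes> \<delta> (N #> h)"
    using d rc[OF g] rc[OF h] unfolding Der_def by blast
  thus ?thesis using rc_mult[OF g h] qact_eq[OF _ h] Der_val[OF d g] MM_sub by auto
qed

lemma Der_N: "\<delta> \<in> Der G N MM \<Longrightarrow> n \<in> N \<Longrightarrow> \<delta> (N #> n) = \<one>"
proof -
  assume d: "\<delta> \<in> Der G N MM" and n: "n \<in> N"
  have e: "N #> n = N #> \<one>" using rc_N[OF n] rc_N[OF one_N] by simp
  have c: "\<delta> (N #> \<one>) \<in> carrier G" using Der_valc[OF d] by simp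
  have "\<delta> (N #> (\<one> \<otimes> \<one>)) = inv \<one> \<otimes> \<delta> (N #> \<one>) \<otimes> \<one> \<otimes> \<delta> (N #> \<one>)"
    using Der_mult[OF d, of \<one> \<one>] by simp
  hence "\<delta> (N #> \<one>) = \<delta> (N #> \<one>) \<otimes> \<delta> (N #> \<one>)" using c by simp
  hence "\<delta> (N #> \<one>) = \<one>" using c by (metis l_cancel_one')
  thus ?thesis using e by simp
qed

lemma Der_ext: "\<delta> \<in> Der G N MM \<Longrightarrow> \<epsilon> \<in> Der G N MM \<Longrightarrow> (\<And>g. g \<in> carrier G \<Longrightarrow> \<delta> (N #> g) = \<epsilon> (N #> g)) \<Longrightarrow> \<delta> = \<epsilon>"
  using Der_PiE rc_cases by (metis PiE_ext)

lemma DD_val: "a \<in> ZN \<Longrightarrow> g \<in> carrier G \<Longrightarrow> DD a (N #> g) = com g a"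
  unfolding DD_def com_def using rc qact_eq subgroup.m_inv_closed[OF ZN_subgroup] by simp

lemma phi_hom: "\<delta> \<in> Der G N MM \<Longrightarrow> phi \<delta> \<in> hom G G"
proof -
  assume d: "\<delta> \<in> Der G N MM"
  show ?thesis unfolding hom_def
  proof (intro CollectI conjI ballI)
    show "phi \<delta> \<in> carrier G \<rightarrow> carrier G" unfolding phi_def using Der_valc[OF d] by auto
    fix g h assume g: "g \<in> carrier G" and h: "h \<in> carrier G"
    have c: "\<delta> (N #> g) \<in> carrier G" "\<delta> (N #> h) \<in> carrier G" using Der_valc[OF d] g h by auto
    show "phi \<delta> (g \<otimes> h) = phi \<delta> g \<otimes> phi \<delta> h"
      unfolding phi_def using g h c Der_mult[OF d g h] by (simp add: m_assoc cancel_l)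
  qed
qed

lemma phi_inj: "\<delta> \<in> Der G N MM \<Longrightarrow> inj_on (phi \<delta>) (carrier G)"
proof (rule inj_onI)
  fix g h assume d: "\<delta> \<in> Der G N MM" and g: "g \<in> carrier G" and h: "h \<in> carrier G"
    and e: "phi \<delta> g = phi \<delta> h"
  have e2: "g \<otimes> \<delta> (N #> g) = h \<otimes> \<delta> (N #> h)" using e g h unfolding phi_def by simp
  have dn: "\<delta> (N #> g) \<in> N" "\<delta> (N #> h) \<in> N" using Der_val[OF d] MM_sub ZN_sub g h by auto
  have "N #> g = N #> h" using rc_mulN[OF g dn(1)] rc_mulN[OF h dn(2)] e2 by simp
  hence e3: "\<delta> (N #> g) = \<delta> (N #> h)" by simp
  have c: "\<delta> (N #> g) \<in> carrier G" using Der_valc[OF d g] .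
  have "g = g \<otimes> \<delta> (N #> g) \<otimes> inv (\<delta> (N #> g))" using g c by (simp add: m_assoc)
  also have "\<dots> = h \<otimes> \<delta> (N #> g) \<otimes> inv (\<delta> (N #> g))" using e2 e3 by simp
  also have "\<dots> = h" using h c by (simp add: m_assoc)
  finally show "g = h" .
qed

lemma phi_auto: "\<delta> \<in> Der G N MM \<Longrightarrow> phi \<delta> \<in> auto G"
proof -
  assume d: "\<delta> \<in> Der G N MM"
  have sub: "phi \<delta> ` carrier G \<subseteq> carrier G" using phi_hom[OF d] unfolding hom_def by auto
  have "phi \<delta> ` carrier G = carrier G" by (rule endo_inj_surj[OF fin sub phi_inj[OF d]])
  hence "bij_betw (phi \<delta>) (carrier G) (carrier G)" using phi_inj[OF d] by (simp add: bij_betw_def)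
  moreover have "phi \<delta> \<in> extensional (carrier G)" unfolding phi_def by simp
  ultimately show ?thesis unfolding auto_def Bij_def using phi_hom[OF d] by simp
qed

end

context lsetup begin

lemma swap_mid: "u \<in> carrier G \<Longrightarrow> a \<in> carrier G \<Longrightarrow> v \<in> carrier G \<Longrightarrow> a \<otimes> v = v \<otimes> a \<Longrightarrow>
  u \<otimes> a \<otimes> v = u \<otimes> v \<otimes> a"
  using m_assoc[of u a v] m_assoc[of u v a] by simp

lemma conj_mult: "g \<in> carrier G \<Longrightarrow> x \<in> carrier G \<Longrightarrow> y \<in> carrier G \<Longrightarrow>
  inv g \<otimes> (x \<otimes> y) \<otimes> g = (inv g \<otimes> x \<otimes> g) \<otimes> (inv g \<otimes> y \<otimes> g)"
  by (simp add: m_assoc cancel_l)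

lemma conj_inv: "g \<in> carrier G \<Longrightarrow> x \<in> carrier G \<Longrightarrow> inv (inv g \<otimes> x \<otimes> g) = inv g \<otimes> inv x \<otimes> g"
  by (simp add: inv_mult_group m_assoc)

lemma ZN_inv: "x \<in> ZN \<Longrightarrow> inv x \<in> ZN" by (rule subgroup.m_inv_closed[OF ZN_subgroup])
lemma ZN_mult: "x \<in> ZN \<Longrightarrow> y \<in> ZN \<Longrightarrow> x \<otimes> y \<in> ZN" by (rule subgroup.m_closed[OF ZN_subgroup])
lemma MM_inv: "x \<in> MM \<Longrightarrow> inv x \<in> MM" by (rule subgroup.m_inv_closed[OF MM_subgroup])
lemma MM_mult: "x \<in> MM \<Longrightarrow> y \<in> MM \<Longrightarrow> x \<otimes> y \<in> MM" by (rule subgroup.m_closed[OF MM_subgroup])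
lemma MM_ZN: "x \<in> MM \<Longrightarrow> x \<in> ZN" using MM_sub by auto

lemma DerI:
  assumes "\<delta> \<in> carrier (G Mod N) \<rightarrow>\<^sub>E MM"
    and "\<And>g h. g \<in> carrier G \<Longrightarrow> h \<in> carrier G \<Longrightarrow> \<delta> (N #> (g \<otimes> h)) = inv h \<otimes> \<delta> (N #> g) \<otimes> h \<otimes> \<delta> (N #> h)"
  shows "\<delta> \<in> Der G N MM"
  unfolding Der_def
proof (intro CollectI conjI ballI)
  show "\<delta> \<in> carrier (G Mod N) \<rightarrow>\<^sub>E MM" by (rule assms(1))
  fix x y assume x: "x \<in> carrier (G Mod N)" and y: "y \<in> carrier (G Mod N)"
  obtain g where g: "g \<in> carrier G" "x = N #> g" using rc_cases[OF x] by blast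
  obtain h where h: "h \<in> carrier G" "y = N #> h" using rc_cases[OF y] by blast
  have "\<delta> (N #> g) \<in> MM" using assms(1) rc[OF g(1)] by auto
  hence q: "qact G (\<delta> x) y = inv h \<otimes> \<delta> (N #> g) \<otimes> h" using qact_eq[OF MM_ZN h(1)] g(2) h(2) by simp
  have "x \<otimes>\<^bsub>G Mod N\<^esub> y = N #> (g \<otimes> h)" using rc_mult[OF g(1) h(1)] g(2) h(2) by simp
  thus "\<delta> (x \<otimes>\<^bsub>G Mod N\<^esub> y) = qact G (\<delta> x) y \<otimes> \<delta> y"
    unfolding q using assms(2)[OF g(1) h(1)] g(2) h(2) by simp
qed

lemma Der_ext2: "\<delta> \<in> extensional (carrier (G Mod N)) \<Longrightarrow> \<epsilon> \<in> extensional (carrier (G Mod N)) \<Longrightarrow>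
  (\<And>g. g \<in> carrier G \<Longrightarrow> \<delta> (N #> g) = \<epsilon> (N #> g)) \<Longrightarrow> \<delta> = \<epsilon>"
proof (rule extensionalityI)
  fix K assume "K \<in> carrier (G Mod N)"
  then obtain g where "g \<in> carrier G" "K = N #> g" using rc_cases by blast
  moreover assume "\<And>g. g \<in> carrier G \<Longrightarrow> \<delta> (N #> g) = \<epsilon> (N #> g)"
  ultimately show "\<delta> K = \<epsilon> K" by simp
qed

lemma Der_extensional: "\<delta> \<in> Der G N MM \<Longrightarrow> \<delta> \<in> extensional (carrier (G Mod N))"
  using Der_PiE by (auto simp: PiE_def)

lemma DD_Der: "h \<in> MM \<Longrightarrow> DD h \<in> Der G N MM"
proof (rule DerI)
  assume h: "h \<in> MM"
  have hz: "h \<in> ZN" "h \<in> carrier G" using h MM_ZN MM_c by auto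
  have cm: "com g h \<in> MM" if "g \<in> carrier G" for g
    unfolding com_def using MM_mult[OF MM_conj[OF that MM_inv[OF h]] h] .
  show "DD h \<in> carrier (G Mod N) \<rightarrow>\<^sub>E MM"
  proof
    fix K assume "K \<in> carrier (G Mod N)"
    then obtain g where "g \<in> carrier G" "K = N #> g" using rc_cases by blast
    thus "DD h K \<in> MM" using DD_val[OF hz(1)] cm by simp
  qed (simp add: DD_def)
  fix g k assume g: "g \<in> carrier G" and k: "k \<in> carrier G"
  show "DD h (N #> (g \<otimes> k)) = inv k \<otimes> DD h (N #> g) \<otimes> k \<otimes> DD h (N #> k)"
    using g k hz by (simp add: DD_val com_def m_assoc inv_mult_group cancel_l)
qed

lemma com_mult: "a \<in> ZN \<Longrightarrow> b \<in> ZN \<Longrightarrow> g \<in> carrier G \<Longrightarrow> com g a \<otimes> com g b = com g (a \<otimes> b)"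
proof -
  assume a: "a \<in> ZN" and b: "b \<in> ZN" and g: "g \<in> carrier G"
  have c: "a \<in> carrier G" "b \<in> carrier G" using a b ZN_c by auto
  define u where "u = inv g \<otimes> inv a \<otimes> g"
  define v where "v = inv g \<otimes> inv b \<otimes> g"
  have uz: "u \<in> ZN" "v \<in> ZN" unfolding u_def v_def using ZN_conj[OF g ZN_inv] a b by auto
  have uc: "u \<in> carrier G" "v \<in> carrier G" using uz ZN_c by auto
  have "com g a \<otimes> com g b = u \<otimes> a \<otimes> (v \<otimes> b)" unfolding com_def u_def v_def ..
  also have "\<dots> = u \<otimes> a \<otimes> v \<otimes> b" using uc c by (simp add: m_assoc)
  also have "\<dots> = u \<otimes> v \<otimes> a \<otimes> b" using swap_mid[OF uc(1) c(1) uc(2) ZN_comm2[OF a uz(2)]] by simp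
  also have "inv (a \<otimes> b) = inv a \<otimes> inv b" using c ZN_comm2[OF a b] by (simp add: inv_mult_group)
  hence "u \<otimes> v = inv g \<otimes> inv (a \<otimes> b) \<otimes> g" unfolding u_def v_def using conj_mult[OF g] c by simp
  finally show ?thesis unfolding com_def using c uc g by (simp add: m_assoc)
qed

lemma com_one: "g \<in> carrier G \<Longrightarrow> com g \<one> = \<one>" unfolding com_def by simp

lemma phi_ext: "\<delta> \<in> Der G N MM \<Longrightarrow> phi \<delta> \<in> extensional (carrier G)" unfolding phi_def by simp

lemma Auto_carrier: "carrier (AutoGroup G) = auto G" by (simp add: AutoGroup_def)
lemma Auto_one: "\<one>\<^bsub>AutoGroup G\<^esub> = (\<lambda>x\<in>carrier G. x)" by (simp add: AutoGroup_def BijGroup_def)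
lemma Auto_mult: "f \<in> auto G \<Longrightarrow> g \<in> auto G \<Longrightarrow> f \<otimes>\<^bsub>AutoGroup G\<^esub> g = compose (carrier G) f g"
  by (simp add: AutoGroup_def BijGroup_def auto_def)

lemma phi_pow: "\<delta> \<in> Der G N MM \<Longrightarrow> phi \<delta> [^]\<^bsub>AutoGroup G\<^esub> (n::nat) = (\<lambda>g\<in>carrier G. g \<otimes> \<delta> (N #> g) [^] n)"
proof (induction n)
  case 0
  have "(\<lambda>g\<in>carrier G. g \<otimes> \<delta> (N #> g) [^] (0::nat)) = (\<lambda>x\<in>carrier G. x)"
    by (rule restrict_ext) simp
  moreover have "phi \<delta> [^]\<^bsub>AutoGroup G\<^esub> (0::nat) = \<one>\<^bsub>AutoGroup G\<^esub>" by (simp add: nat_pow_def)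
  ultimately show ?case unfolding Auto_one by simp
next
  case (Suc n)
  interpret A: group "AutoGroup G" by (rule AutoGroup)
  have pa: "phi \<delta> \<in> auto G" using phi_auto[OF Suc.prems] .
  have pna: "phi \<delta> [^]\<^bsub>AutoGroup G\<^esub> n \<in> auto G" using A.nat_pow_closed pa Auto_carrier by auto
  have "phi \<delta> [^]\<^bsub>AutoGroup G\<^esub> Suc n = compose (carrier G) (phi \<delta> [^]\<^bsub>AutoGroup G\<^esub> n) (phi \<delta>)"
    using Auto_mult[OF pna pa] by simp
  also have "\<dots> = (\<lambda>g\<in>carrier G. g \<otimes> \<delta> (N #> g) [^] Suc n)"
    unfolding compose_def
  proof (rule restrict_ext)
    fix g assume g: "g \<in> carrier G"
    define d where "d = \<delta> (N #> g)"
    have dc: "d \<in> carrier G" "d \<in> N" unfolding d_def using Der_val[OF Suc.prems g] MM_c MM_sub ZN_sub by auto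
    have "phi \<delta> g = g \<otimes> d" unfolding phi_def d_def using g by simp
    moreover have "N #> (g \<otimes> d) = N #> g" using rc_mulN[OF g dc(2)] .
    ultimately show "(phi \<delta> [^]\<^bsub>AutoGroup G\<^esub> n) (phi \<delta> g) = g \<otimes> \<delta> (N #> g) [^] Suc n"
      unfolding Suc.IH[OF Suc.prems] using g dc by (simp add: d_def[symmetric] m_assoc nat_pow_Suc2[OF dc(1), symmetric])
  qed
  finally show ?case .
qed

lemma inner_one: "(\<lambda>x\<in>carrier G. x) \<in> inner_auto G"
  unfolding inner_auto_def by (auto intro!: bexI[of _ \<one>] restrict_ext)

lemma phi_ord:
  assumes pr: "Factorial_Ring.prime p" and d: "\<delta> \<in> Der G N MM" and ni: "phi \<delta> \<notin> inner_auto G"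
  shows "group.ord (AutoGroup G) (phi \<delta>) = p"
proof -
  interpret A: group "AutoGroup G" by (rule AutoGroup)
  have pa: "phi \<delta> \<in> carrier (AutoGroup G)" using phi_auto[OF d] Auto_carrier by simp
  have "phi \<delta> [^]\<^bsub>AutoGroup G\<^esub> p = \<one>\<^bsub>AutoGroup G\<^esub>"
    unfolding phi_pow[OF d] Auto_one
    by (rule restrict_ext) (use Der_val[OF d] MM_pow in simp)
  hence dv: "A.ord (phi \<delta>) dvd p" using A.pow_eq_id[OF pa] by simp
  have "A.ord (phi \<delta>) \<noteq> 1"
  proof
    assume "A.ord (phi \<delta>) = 1"
    hence "phi \<delta> = \<one>\<^bsub>AutoGroup G\<^esub>" using A.ord_eq_1[OF pa] by simp
    thus False using ni inner_one Auto_one by simp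
  qed
  moreover have "A.ord (phi \<delta>) = 1 \<or> A.ord (phi \<delta>) = p" using dv pr prime_nat_iff by blast
  ultimately show ?thesis by blast
qed

lemma phi_inner:
  assumes d: "\<delta> \<in> Der G N MM" and i: "phi \<delta> \<in> inner_auto G"
  shows "\<exists>a\<in>AA. DD a = \<delta>"
proof -
  obtain c where c: "c \<in> carrier G" and pe: "phi \<delta> = (\<lambda>x\<in>carrier G. c \<otimes> x \<otimes> inv c)"
    using i unfolding inner_auto_def by blast
  have "c \<in> centralizer G N"
    unfolding centralizer_def
  proof (intro CollectI conjI ballI)
    show "c \<in> carrier G" by (rule c)
    fix n assume n: "n \<in> N"
    have nc: "n \<in> carrier G" using n Nc by auto
    have "phi \<delta> n = n" unfolding phi_def using nc Der_N[OF d n] by simp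
    moreover have "phi \<delta> n = c \<otimes> n \<otimes> inv c" using pe nc by simp
    ultimately have "c \<otimes> n \<otimes> inv c = n" by simp
    hence "c \<otimes> n \<otimes> inv c \<otimes> c = n \<otimes> c" by simp
    thus "c \<otimes> n = n \<otimes> c" using c nc by (simp add: m_assoc)
  qed
  hence cN: "c \<in> N" using cent by auto
  have cZ: "c \<in> ZN" unfolding ZN_def
  proof (intro CollectI conjI ballI)
    show "c \<in> N" by (rule cN)
    fix s assume "s \<in> N" thus "c \<otimes> s = s \<otimes> c" using \<open>c \<in> centralizer G N\<close> unfolding centralizer_def by auto
  qed
  define a where "a = inv c"
  have aZ: "a \<in> ZN" unfolding a_def using ZN_inv[OF cZ] .
  have val: "\<delta> (N #> g) = com g a" if g: "g \<in> carrier G" for g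
  proof -
    have dc: "\<delta> (N #> g) \<in> carrier G" using Der_valc[OF d g] .
    have "phi \<delta> g = c \<otimes> g \<otimes> inv c" using pe g by simp
    hence "g \<otimes> \<delta> (N #> g) = c \<otimes> g \<otimes> inv c" using g unfolding phi_def by simp
    hence "inv g \<otimes> (g \<otimes> \<delta> (N #> g)) = inv g \<otimes> (c \<otimes> g \<otimes> inv c)" by simp
    hence "\<delta> (N #> g) = inv g \<otimes> (c \<otimes> g \<otimes> inv c)" using g dc by (simp add: cancel_l2)
    thus ?thesis unfolding com_def a_def using g c by (simp add: m_assoc)
  qed
  have aA: "a \<in> AA" unfolding AA_def using aZ val Der_val[OF d] by auto
  have "DD a \<in> extensional (carrier (G Mod N))" unfolding DD_def by simp
  hence "DD a = \<delta>"
    by (rule Der_ext2[OF _ Der_extensional[OF d]]) (simp add: DD_val[OF aZ] val)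
  thus ?thesis using aA by blast
qed

end

context lsetup begin

abbreviation "Dg \<equiv> DerGroup G N MM"

lemma Der_valK: "\<delta> \<in> Der G N MM \<Longrightarrow> K \<in> carrier (G Mod N) \<Longrightarrow> \<delta> K \<in> MM"
  using Der_PiE by (metis PiE_mem)
lemma Der_valKc: "\<delta> \<in> Der G N MM \<Longrightarrow> K \<in> carrier (G Mod N) \<Longrightarrow> \<delta> K \<in> carrier G"
  using Der_valK MM_c by blast

lemma Dg_carrier: "carrier Dg = Der G N MM" by (simp add: DerGroup_def)
lemma Dg_mult: "x \<otimes>\<^bsub>Dg\<^esub> y = (\<lambda>K\<in>carrier (G Mod N). x K \<otimes> y K)" by (simp add: DerGroup_def)
lemma Dg_one: "\<one>\<^bsub>Dg\<^esub> = (\<lambda>K\<in>carrier (G Mod N). \<one>)" by (simp add: DerGroup_def)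

lemma Der_mult_closed:
  assumes d: "\<delta> \<in> Der G N MM" and e: "\<epsilon> \<in> Der G N MM"
  shows "(\<lambda>K\<in>carrier (G Mod N). \<delta> K \<otimes> \<epsilon> K) \<in> Der G N MM"
proof (rule DerI)
  show "(\<lambda>K\<in>carrier (G Mod N). \<delta> K \<otimes> \<epsilon> K) \<in> carrier (G Mod N) \<rightarrow>\<^sub>E MM"
    using Der_valK[OF d] Der_valK[OF e] MM_mult by auto
  fix g h assume g: "g \<in> carrier G" and h: "h \<in> carrier G"
  define dg where "dg = \<delta> (N #> g)"
  define dh where "dh = \<delta> (N #> h)"
  define eg where "eg = \<epsilon> (N #> g)"
  define eh where "eh = \<epsilon> (N #> h)"
  have M: "dg \<in> MM" "dh \<in> MM" "eg \<in> MM" "eh \<in> MM" unfolding dg_def dh_def eg_def eh_def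
    using Der_val[OF d] Der_val[OF e] g h by auto
  have c: "dg \<in> carrier G" "dh \<in> carrier G" "eg \<in> carrier G" "eh \<in> carrier G" using M MM_c by auto
  define u where "u = inv h \<otimes> dg \<otimes> h"
  define v where "v = inv h \<otimes> eg \<otimes> h"
  have uz: "u \<in> ZN" "v \<in> ZN" unfolding u_def v_def using ZN_conj[OF h] M MM_ZN by auto
  have uc: "u \<in> carrier G" "v \<in> carrier G" using uz ZN_c by auto
  have "(\<lambda>K\<in>carrier (G Mod N). \<delta> K \<otimes> \<epsilon> K) (N #> (g \<otimes> h)) = \<delta> (N #> (g \<otimes> h)) \<otimes> \<epsilon> (N #> (g \<otimes> h))"
    using rc g h by simp
  also have "\<dots> = u \<otimes> dh \<otimes> (v \<otimes> eh)"
    unfolding u_def v_def dh_def eh_def dg_def eg_def using Der_mult[OF d g h] Der_mult[OF e g h] by simp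
  also have "\<dots> = u \<otimes> dh \<otimes> v \<otimes> eh" using uc c by (simp add: m_assoc)
  also have "\<dots> = u \<otimes> v \<otimes> dh \<otimes> eh" using swap_mid[OF uc(1) c(2) uc(2) ZN_comm2[OF MM_ZN[OF M(2)] uz(2)]] by simp
  also have "\<dots> = inv h \<otimes> (dg \<otimes> eg) \<otimes> h \<otimes> (dh \<otimes> eh)"
    unfolding u_def v_def using conj_mult[OF h c(1) c(3)] h c by (simp add: m_assoc)
  also have "\<dots> = inv h \<otimes> (\<lambda>K\<in>carrier (G Mod N). \<delta> K \<otimes> \<epsilon> K) (N #> g) \<otimes> h \<otimes> (\<lambda>K\<in>carrier (G Mod N). \<delta> K \<otimes> \<epsilon> K) (N #> h)"
    using rc g h unfolding dg_def dh_def eg_def eh_def by simp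
  finally show "(\<lambda>K\<in>carrier (G Mod N). \<delta> K \<otimes> \<epsilon> K) (N #> (g \<otimes> h)) = inv h \<otimes> (\<lambda>K\<in>carrier (G Mod N). \<delta> K \<otimes> \<epsilon> K) (N #> g) \<otimes> h \<otimes> (\<lambda>K\<in>carrier (G Mod N). \<delta> K \<otimes> \<epsilon> K) (N #> h)" .
qed

lemma Der_inv_closed:
  assumes d: "\<delta> \<in> Der G N MM"
  shows "(\<lambda>K\<in>carrier (G Mod N). inv (\<delta> K)) \<in> Der G N MM"
proof (rule DerI)
  show "(\<lambda>K\<in>carrier (G Mod N). inv (\<delta> K)) \<in> carrier (G Mod N) \<rightarrow>\<^sub>E MM"
    using Der_valK[OF d] MM_inv by auto
  fix g h assume g: "g \<in> carrier G" and h: "h \<in> carrier G"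
  define dg where "dg = \<delta> (N #> g)"
  define dh where "dh = \<delta> (N #> h)"
  have M: "dg \<in> MM" "dh \<in> MM" unfolding dg_def dh_def using Der_val[OF d] g h by auto
  have c: "dg \<in> carrier G" "dh \<in> carrier G" using M MM_c by auto
  define u where "u = inv h \<otimes> dg \<otimes> h"
  have uz: "u \<in> ZN" unfolding u_def using ZN_conj[OF h] M MM_ZN by auto
  have uc: "u \<in> carrier G" using uz ZN_c by auto
  have "(\<lambda>K\<in>carrier (G Mod N). inv (\<delta> K)) (N #> (g \<otimes> h)) = inv (u \<otimes> dh)"
    using rc g h Der_mult[OF d g h] unfolding u_def dg_def dh_def by simp
  also have "\<dots> = inv dh \<otimes> inv u" using uc c by (simp add: inv_mult_group)
  also have "\<dots> = inv u \<otimes> inv dh" using ZN_comm2[OF ZN_inv[OF MM_ZN[OF M(2)]] ZN_inv[OF uz]] .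
  also have "\<dots> = inv h \<otimes> inv dg \<otimes> h \<otimes> inv dh" unfolding u_def using conj_inv[OF h c(1)] by simp
  also have "\<dots> = inv h \<otimes> (\<lambda>K\<in>carrier (G Mod N). inv (\<delta> K)) (N #> g) \<otimes> h \<otimes> (\<lambda>K\<in>carrier (G Mod N). inv (\<delta> K)) (N #> h)"
    using rc g h unfolding dg_def dh_def by simp
  finally show "(\<lambda>K\<in>carrier (G Mod N). inv (\<delta> K)) (N #> (g \<otimes> h)) = inv h \<otimes> (\<lambda>K\<in>carrier (G Mod N). inv (\<delta> K)) (N #> g) \<otimes> h \<otimes> (\<lambda>K\<in>carrier (G Mod N). inv (\<delta> K)) (N #> h)" .
qed

lemma one_Der: "(\<lambda>K\<in>carrier (G Mod N). \<one>) \<in> Der G N MM"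
proof (rule DerI)
  show "(\<lambda>K\<in>carrier (G Mod N). \<one>) \<in> carrier (G Mod N) \<rightarrow>\<^sub>E MM"
    using subgroup.one_closed[OF MM_subgroup] by auto
  fix g h assume g: "g \<in> carrier G" and h: "h \<in> carrier G"
  show "(\<lambda>K\<in>carrier (G Mod N). \<one>) (N #> (g \<otimes> h)) = inv h \<otimes> (\<lambda>K\<in>carrier (G Mod N). \<one>) (N #> g) \<otimes> h \<otimes> (\<lambda>K\<in>carrier (G Mod N). \<one>) (N #> h)"
    using rc g h by simp
qed

lemma Dg_group: "group Dg"
proof (rule groupI)
  fix x y assume "x \<in> carrier Dg" "y \<in> carrier Dg"
  thus "x \<otimes>\<^bsub>Dg\<^esub> y \<in> carrier Dg" unfolding Dg_carrier Dg_mult by (rule Der_mult_closed)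
next
  show "\<one>\<^bsub>Dg\<^esub> \<in> carrier Dg" unfolding Dg_carrier Dg_one by (rule one_Der)
next
  fix x y z assume x: "x \<in> carrier Dg" and y: "y \<in> carrier Dg" and z: "z \<in> carrier Dg"
  show "x \<otimes>\<^bsub>Dg\<^esub> y \<otimes>\<^bsub>Dg\<^esub> z = x \<otimes>\<^bsub>Dg\<^esub> (y \<otimes>\<^bsub>Dg\<^esub> z)"
    unfolding Dg_mult
    by (rule restrict_ext) (use x y z Der_valKc m_assoc in \<open>simp add: Dg_carrier\<close>)
next
  fix x assume x: "x \<in> carrier Dg"
  show "\<one>\<^bsub>Dg\<^esub> \<otimes>\<^bsub>Dg\<^esub> x = x" unfolding Dg_mult Dg_one
  proof (rule extensionalityI[OF restrict_extensional Der_extensional])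
    show "x \<in> Der G N MM" using x Dg_carrier by simp
    fix K assume "K \<in> carrier (G Mod N)"
    thus "(\<lambda>K\<in>carrier (G Mod N). (\<lambda>K\<in>carrier (G Mod N). \<one>) K \<otimes> x K) K = x K"
      using Der_valKc x Dg_carrier by simp
  qed
next
  fix x assume x: "x \<in> carrier Dg"
  hence xd: "x \<in> Der G N MM" using Dg_carrier by simp
  show "\<exists>y\<in>carrier Dg. y \<otimes>\<^bsub>Dg\<^esub> x = \<one>\<^bsub>Dg\<^esub>"
  proof (intro bexI)
    show "(\<lambda>K\<in>carrier (G Mod N). inv (x K)) \<in> carrier Dg" unfolding Dg_carrier by (rule Der_inv_closed[OF xd])
    show "(\<lambda>K\<in>carrier (G Mod N). inv (x K)) \<otimes>\<^bsub>Dg\<^esub> x = \<one>\<^bsub>Dg\<^esub>" unfolding Dg_mult Dg_one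
      by (rule restrict_ext) (use Der_valKc[OF xd] in simp)
  qed
qed

lemma Ider_eq: "Ider G N MM = DD ` MM"
  unfolding Ider_def DD_def by auto

lemma DD_ext: "DD a \<in> extensional (carrier (G Mod N))" unfolding DD_def by simp

lemma DD_mult: "a \<in> ZN \<Longrightarrow> b \<in> ZN \<Longrightarrow> DD a \<otimes>\<^bsub>Dg\<^esub> DD b = DD (a \<otimes> b)"
  unfolding Dg_mult
  by (rule Der_ext2[OF restrict_extensional DD_ext]) (simp add: rc DD_val ZN_mult com_mult)

lemma DD_one: "DD \<one> = \<one>\<^bsub>Dg\<^esub>"
  unfolding Dg_one
  by (rule Der_ext2[OF DD_ext restrict_extensional]) (simp add: rc DD_val[OF subgroup.one_closed[OF ZN_subgroup]] com_one)

lemma Ider_subgroup: "subgroup (Ider G N MM) Dg"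
proof -
  interpret D: group Dg by (rule Dg_group)
  show ?thesis unfolding Ider_eq
  proof (rule D.subgroupI)
    show "DD ` MM \<subseteq> carrier Dg" using DD_Der Dg_carrier by auto
    show "DD ` MM \<noteq> {}" using subgroup.one_closed[OF MM_subgroup] by auto
  next
    fix x assume "x \<in> DD ` MM"
    then obtain h where h: "h \<in> MM" "x = DD h" by auto
    have "inv\<^bsub>Dg\<^esub> (DD h) = DD (inv h)"
    proof (rule D.inv_equality)
      show "DD (inv h) \<otimes>\<^bsub>Dg\<^esub> DD h = \<one>\<^bsub>Dg\<^esub>"
        using DD_mult[OF MM_ZN[OF MM_inv[OF h(1)]] MM_ZN[OF h(1)]] DD_one MM_c[OF h(1)] by simp
      show "DD h \<in> carrier Dg" using DD_Der[OF h(1)] Dg_carrier by simp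
      show "DD (inv h) \<in> carrier Dg" using DD_Der[OF MM_inv[OF h(1)]] Dg_carrier by simp
    qed
    thus "inv\<^bsub>Dg\<^esub> x \<in> DD ` MM" using h MM_inv by auto
  next
    fix x y assume "x \<in> DD ` MM" "y \<in> DD ` MM"
    then obtain h k where h: "h \<in> MM" "x = DD h" and k: "k \<in> MM" "y = DD k" by auto
    thus "x \<otimes>\<^bsub>Dg\<^esub> y \<in> DD ` MM" using DD_mult[OF MM_ZN[OF h(1)] MM_ZN[OF k(1)]] MM_mult by auto
  qed
qed

end

context lsetup begin

lemma com_central: "z \<in> ZG \<Longrightarrow> g \<in> carrier G \<Longrightarrow> com g z = \<one>"
proof -
  assume z: "z \<in> ZG" and g: "g \<in> carrier G"
  have zi: "inv z \<in> ZG" using subgroup.m_inv_closed[OF ZG_subgroup z] .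
  have c: "z \<in> carrier G" "inv z \<in> carrier G" using ZG_c z zi by auto
  have "com g z = inv g \<otimes> (inv z \<otimes> g) \<otimes> z" unfolding com_def using g c by (simp add: m_assoc)
  also have "\<dots> = inv g \<otimes> (g \<otimes> inv z) \<otimes> z" using ZG_comm[OF zi g] by simp
  also have "\<dots> = \<one>" using g c by (simp add: m_assoc cancel_l2)
  finally show ?thesis .
qed

lemma com_trivial: "z \<in> carrier G \<Longrightarrow> g \<in> carrier G \<Longrightarrow> com g z = \<one> \<Longrightarrow> z \<otimes> g = g \<otimes> z"
proof -
  assume z: "z \<in> carrier G" and g: "g \<in> carrier G" and e: "com g z = \<one>"
  have "(inv g \<otimes> inv z \<otimes> g) \<otimes> z = \<one>" using e unfolding com_def .
  hence i: "inv z = inv g \<otimes> inv z \<otimes> g" using z g by (intro inv_equality) auto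
  have "g \<otimes> inv z = g \<otimes> (inv g \<otimes> inv z \<otimes> g)" using i by simp
  also have "\<dots> = inv z \<otimes> g" using z g by (simp add: m_assoc cancel_l)
  finally have "inv z \<otimes> g = g \<otimes> inv z" by simp
  hence "inv (inv z) \<otimes> g = g \<otimes> inv (inv z)" using comm_inv[of "inv z" g] z g by simp
  thus ?thesis using z by simp
qed

lemma finite_AA: "finite AA" unfolding AA_def using fin ZN_c by (auto intro: finite_subset)
lemma finite_MM: "finite MM" using fin MM_c by (auto intro: finite_subset)
lemma finite_ZG: "finite ZG" using fin ZG_c by (auto intro: finite_subset)

lemma count1:
  assumes sub: "Der G N MM \<subseteq> DD ` AA"
  shows "card (Der G N MM) * card ZG \<le> card AA"
proof (rule card_fibers_ge[OF finite_AA sub])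
  fix \<delta> assume "\<delta> \<in> Der G N MM"
  then obtain a0 where a0: "a0 \<in> AA" "DD a0 = \<delta>" using sub by auto
  have a0z: "a0 \<in> ZN" using a0 unfolding AA_def by auto
  have a0c: "a0 \<in> carrier G" using ZN_c[OF a0z] .
  have img: "(\<lambda>z. a0 \<otimes> z) ` ZG \<subseteq> {a \<in> AA. DD a = \<delta>}"
  proof
    fix x assume "x \<in> (\<lambda>z. a0 \<otimes> z) ` ZG"
    then obtain z where z: "z \<in> ZG" "x = a0 \<otimes> z" by auto
    have zz: "z \<in> ZN" using z ZG_sub by auto
    have cm: "com g x = com g a0" if g: "g \<in> carrier G" for g
      using com_mult[OF a0z zz g] com_central[OF z(1) g] z(2) g a0c by (simp add: com_def)
    have xz: "x \<in> ZN" using ZN_mult[OF a0z zz] z by simp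
    have "x \<in> AA" unfolding AA_def using xz cm a0 unfolding AA_def by auto
    moreover have "DD x = DD a0"
      by (rule Der_ext2[OF DD_ext DD_ext]) (simp add: DD_val[OF xz] DD_val[OF a0z] cm)
    ultimately show "x \<in> {a \<in> AA. DD a = \<delta>}" using a0 by simp
  qed
  have "inj_on (\<lambda>z. a0 \<otimes> z) ZG" using a0c ZG_c by (auto simp: inj_on_def)
  hence "card ZG = card ((\<lambda>z. a0 \<otimes> z) ` ZG)" by (simp add: card_image)
  also have "\<dots> \<le> card {a \<in> AA. DD a = \<delta>}" using img finite_AA by (simp add: card_mono)
  finally show "card ZG \<le> card {a \<in> AA. DD a = \<delta>}" .
qed

lemma AA_pow: "a \<in> AA \<Longrightarrow> a [^] p \<in> ZG"
proof -
  assume a: "a \<in> AA"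
  have az: "a \<in> ZN" and ac: "a \<in> carrier G" using a ZN_c unfolding AA_def by auto
  have "\<forall>x\<in>carrier G. a [^] p \<otimes> x = x \<otimes> a [^] p"
  proof
    fix x assume x: "x \<in> carrier G"
    define c where "c = com x a"
    have cM: "c \<in> MM" using a x unfolding AA_def c_def by auto
    have cc: "c \<in> carrier G" using MM_c[OF cM] .
    define w where "w = inv x \<otimes> a \<otimes> x"
    have wc: "w \<in> carrier G" unfolding w_def using x ac by simp
    have "c = inv w \<otimes> a" unfolding c_def com_def w_def using conj_inv[OF x ac] by simp
    hence "w \<otimes> c = a" using wc ac by (simp add: m_assoc cancel_l)
    hence "w = a \<otimes> inv c" using wc cc ac by (metis inv_solve_right)
    hence "w [^] p = a [^] p \<otimes> (inv c) [^] p"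
      using pow_mult_distrib[OF ZN_comm2[OF az ZN_inv[OF MM_ZN[OF cM]]] ac] cc by simp
    also have "\<dots> = a [^] p" using cc MM_pow[OF cM] ac by (simp add: nat_pow_inv)
    finally have "inv x \<otimes> a [^] p \<otimes> x = a [^] p" using conj_pow[OF x ac] unfolding w_def by simp
    hence "x \<otimes> (inv x \<otimes> a [^] p \<otimes> x) = x \<otimes> a [^] p" by simp
    thus "a [^] p \<otimes> x = x \<otimes> a [^] p" using x ac by (simp add: m_assoc cancel_l)
  qed
  thus ?thesis unfolding ZG_def centralizer_def using ac by simp
qed

lemma count2: "card AA \<le> card ZG * card MM"
proof (rule card_fibers_le[OF finite_AA _ finite_ZG])
  show "(\<lambda>a. a [^] p) ` AA \<subseteq> ZG" using AA_pow by auto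
  fix y assume y: "y \<in> ZG"
  show "card {a \<in> AA. a [^] p = y} \<le> card MM"
  proof (cases "{a \<in> AA. a [^] p = y} = {}")
    case True show ?thesis unfolding True by simp
  next
    case False
    then obtain a0 where a0: "a0 \<in> AA" "a0 [^] p = y" by auto
    have a0z: "a0 \<in> ZN" using a0 unfolding AA_def by auto
    have a0c: "a0 \<in> carrier G" using ZN_c[OF a0z] .
    have img: "(\<lambda>a. a \<otimes> inv a0) ` {a \<in> AA. a [^] p = y} \<subseteq> MM"
    proof
      fix x assume "x \<in> (\<lambda>a. a \<otimes> inv a0) ` {a \<in> AA. a [^] p = y}"
      then obtain a where a: "a \<in> AA" "a [^] p = y" "x = a \<otimes> inv a0" by auto
      have az: "a \<in> ZN" using a unfolding AA_def by auto
      have ac: "a \<in> carrier G" using ZN_c[OF az] .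
      have xz: "x \<in> ZN" using a(3) ZN_mult[OF az ZN_inv[OF a0z]] by simp
      have "x [^] p = a [^] p \<otimes> (inv a0) [^] p"
        using a(3) pow_mult_distrib[OF ZN_comm2[OF az ZN_inv[OF a0z]] ac] a0c by simp
      also have "\<dots> = \<one>" using a a0 a0c ac ZG_c[OF y] by (simp add: nat_pow_inv)
      finally show "x \<in> MM" unfolding MM_def using xz by simp
    qed
    have "inj_on (\<lambda>a. a \<otimes> inv a0) {a \<in> AA. a [^] p = y}"
      using a0c ZN_c unfolding AA_def by (auto simp: inj_on_def)
    hence "card {a \<in> AA. a [^] p = y} = card ((\<lambda>a. a \<otimes> inv a0) ` {a \<in> AA. a [^] p = y})"
      by (simp add: card_image)
    also have "\<dots> \<le> card MM" using img finite_MM by (simp add: card_mono)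
    finally show ?thesis .
  qed
qed

lemma count3: "card MM \<le> card (Ider G N MM) * card (MM \<inter> ZG)"
proof (rule card_fibers_le[OF finite_MM])
  show "DD ` MM \<subseteq> Ider G N MM" using Ider_eq by simp
  show "finite (Ider G N MM)" using Ider_eq finite_MM by simp
  fix y assume y: "y \<in> Ider G N MM"
  show "card {a \<in> MM. DD a = y} \<le> card (MM \<inter> ZG)"
  proof (cases "{a \<in> MM. DD a = y} = {}")
    case True show ?thesis unfolding True by simp
  next
    case False
    then obtain h0 where h0: "h0 \<in> MM" "DD h0 = y" by auto
    have h0z: "h0 \<in> ZN" using MM_ZN[OF h0(1)] .
    have h0c: "h0 \<in> carrier G" using ZN_c[OF h0z] .
    have img: "(\<lambda>a. a \<otimes> inv h0) ` {a \<in> MM. DD a = y} \<subseteq> MM \<inter> ZG"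
    proof
      fix x assume "x \<in> (\<lambda>a. a \<otimes> inv h0) ` {a \<in> MM. DD a = y}"
      then obtain b where b: "b \<in> MM" "DD b = y" "x = b \<otimes> inv h0" by auto
      have bz: "b \<in> ZN" using MM_ZN[OF b(1)] .
      have xM: "x \<in> MM" using b(3) MM_mult[OF b(1) MM_inv[OF h0(1)]] by simp
      have xc: "x \<in> carrier G" using MM_c[OF xM] .
      have "\<forall>g\<in>carrier G. x \<otimes> g = g \<otimes> x"
      proof
        fix g assume g: "g \<in> carrier G"
        have "com g b = com g h0" using DD_val[OF bz g] DD_val[OF h0z g] b(2) h0(2) by simp
        hence "com g x = com g h0 \<otimes> com g (inv h0)"
          using com_mult[OF bz ZN_inv[OF h0z] g] b(3) by simp
        also have "\<dots> = \<one>" using com_mult[OF h0z ZN_inv[OF h0z] g] com_one[OF g] h0c by simp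
        finally show "x \<otimes> g = g \<otimes> x" using com_trivial[OF xc g] by simp
      qed
      thus "x \<in> MM \<inter> ZG" using xM xc unfolding ZG_def centralizer_def by simp
    qed
    have "inj_on (\<lambda>a. a \<otimes> inv h0) {a \<in> MM. DD a = y}"
      using h0c MM_c by (auto simp: inj_on_def)
    hence "card {a \<in> MM. DD a = y} = card ((\<lambda>a. a \<otimes> inv h0) ` {a \<in> MM. DD a = y})"
      by (simp add: card_image)
    also have "\<dots> \<le> card (MM \<inter> ZG)" using img finite_MM by (simp add: card_mono)
    finally show ?thesis .
  qed
qed

theorem main_local:
  assumes pr: "Factorial_Ring.prime p"
    and iso: "H1 G N MM \<cong> Fp_pow p m"
    and small: "card (MM \<inter> ZG) < p ^ m"
  shows "\<exists>\<phi>\<in>auto G. \<phi> \<notin> inner_auto G \<and> group.ord (AutoGroup G) \<phi> = p"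
proof (rule ccontr)
  assume na: "\<not> ?thesis"
  have sub: "Der G N MM \<subseteq> DD ` AA"
  proof
    fix \<delta> assume d: "\<delta> \<in> Der G N MM"
    have "phi \<delta> \<in> inner_auto G"
    proof (rule ccontr)
      assume "phi \<delta> \<notin> inner_auto G"
      hence "phi \<delta> \<in> auto G \<and> phi \<delta> \<notin> inner_auto G \<and> group.ord (AutoGroup G) (phi \<delta>) = p"
        using phi_auto[OF d] phi_ord[OF pr d] by simp
      thus False using na by auto
    qed
    thus "\<delta> \<in> DD ` AA" using phi_inner[OF d] by auto
  qed
  interpret D: group Dg by (rule Dg_group)
  have finD: "finite (Der G N MM)"
  proof (rule finite_subset)
    show "Der G N MM \<subseteq> carrier (G Mod N) \<rightarrow>\<^sub>E MM" using Der_PiE by auto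
    have "finite (carrier (G Mod N))" unfolding FactGroup_def RCOSETS_def using fin by simp
    thus "finite (carrier (G Mod N) \<rightarrow>\<^sub>E MM)" using finite_MM by (simp add: finite_PiE)
  qed
  have lag: "card (rcosets\<^bsub>Dg\<^esub> (Ider G N MM)) * card (Ider G N MM) = card (Der G N MM)"
    using D.lagrange[OF Ider_subgroup] by (simp add: order_def Dg_carrier)
  have "card (carrier (H1 G N MM)) = card (carrier (Fp_pow p m))" by (rule iso_same_card[OF iso])
  moreover have "carrier (H1 G N MM) = rcosets\<^bsub>Dg\<^esub> (Ider G N MM)" by (simp add: H1_def FactGroup_def)
  moreover have "card (carrier (Fp_pow p m)) = p ^ m" by (simp add: Fp_pow_def card_PiE)
  ultimately have cD: "card (Der G N MM) = p ^ m * card (Ider G N MM)" using lag by simp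
  have "card (Der G N MM) * card ZG \<le> card ZG * (card (Ider G N MM) * card (MM \<inter> ZG))"
  proof -
    have "card ZG * card MM \<le> card ZG * (card (Ider G N MM) * card (MM \<inter> ZG))"
      using count3 by simp
    thus ?thesis using count1[OF sub] count2 by linarith
  qed
  moreover have "card ZG > 0"
  proof -
    have "\<one> \<in> ZG" by (rule subgroup.one_closed[OF ZG_subgroup])
    thus ?thesis using finite_ZG by (auto simp: card_gt_0_iff)
  qed
  ultimately have "card (Der G N MM) \<le> card (Ider G N MM) * card (MM \<inter> ZG)" by (simp add: mult.commute)
  hence "p ^ m * card (Ider G N MM) \<le> card (MM \<inter> ZG) * card (Ider G N MM)" using cD by (simp add: mult.commute)
  moreover have "card (Ider G N MM) > 0"
  proof -
    have "\<one> \<in> MM" by (rule subgroup.one_closed[OF MM_subgroup])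
    thus ?thesis using finite_MM Ider_eq by (auto simp: card_gt_0_iff)
  qed
  ultimately have "p ^ m \<le> card (MM \<inter> ZG)" by simp
  thus False using small by simp
qed

end

theorem lemma2p5:
  fixes G :: "('a, 'b) monoid_scheme" and N :: "'a set" and p m :: nat
  assumes "Factorial_Ring.prime p" and "odd p"
    and "p_group G p"
    and "\<not> comm_group G"
    and "N \<lhd> G"
    and "centralizer G N \<subseteq> N"
    and "m > 0"
    and "min_gens (subgrp G (center G)) < m"
    and "H1 G N (Omega1 (subgrp G (center (subgrp G N))) p) \<cong> Fp_pow p m"
  shows "\<exists>\<phi>\<in>auto G. \<phi> \<notin> inner_auto G \<and> group.ord (AutoGroup G) \<phi> = p"
proof -
  have grp: "group G" and fin: "finite (carrier G)" using assms(3) unfolding p_group_def by auto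
  have p1: "p > 1" using assms(1) prime_gt_1_nat by blast
  interpret L: lsetup N G p
    by (rule lsetup.intro[OF assms(5)]) (unfold lsetup_axioms_def, use fin assms(6) p1 in auto)
  have iso: "H1 G N L.MM \<cong> Fp_pow p m" using assms(9) L.center_N L.Omega1_eq by simp
  define K where "K = G\<lparr>carrier := L.ZG\<rparr>"
  have cK: "center G = L.ZG" unfolding center_def L.ZG_def ..
  have Kg: "group K" unfolding K_def by (rule L.subgroup_imp_group[OF L.ZG_subgroup])
  have Kc: "comm_group K"
    by (rule group.group_comm_groupI[OF Kg]) (simp add: K_def L.ZG_comm L.ZG_c)
  have finK: "finite (carrier K)" unfolding K_def using L.finite_ZG by simp
  have ex: "\<exists>S. S \<subseteq> carrier K \<and> finite S \<and> card S = card (carrier K) \<and> generate K S = carrier K"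
  proof (intro exI conjI)
    show "generate K (carrier K) = carrier K"
    proof
      show "generate K (carrier K) \<subseteq> carrier K" by (rule group.generate_incl[OF Kg]) simp
      show "carrier K \<subseteq> generate K (carrier K)" using generate.incl[of _ "carrier K" K] by blast
    qed
  qed (use finK in auto)
  have "\<exists>S. S \<subseteq> carrier K \<and> finite S \<and> card S = min_gens K \<and> generate K S = carrier K"
    unfolding min_gens_def by (rule LeastI_ex) (use ex in blast)
  then obtain S where S: "S \<subseteq> carrier K" "finite S" "card S = min_gens K" "generate K S = carrier K"
    by blast
  have b: "card {x\<in>carrier K. x [^]\<^bsub>K\<^esub> p = \<one>\<^bsub>K\<^esub>} \<le> p ^ card S"
    by (rule comm_group.omega_bound[OF Kc finK p1 S(1,2,4)])
  have "{x\<in>carrier K. x [^]\<^bsub>K\<^esub> p = \<one>\<^bsub>K\<^esub>} = L.MM \<inter> L.ZG"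
    unfolding K_def L.MM_def using L.ZG_sub by (auto simp: L.nat_pow_consistent[symmetric])
  moreover have "card S < m" using S(3) assms(8) cK K_def by simp
  hence "p ^ card S < p ^ m" using p1 by (simp add: power_strict_increasing)
  ultimately have small: "card (L.MM \<inter> L.ZG) < p ^ m" using b by simp
  show ?thesis by (rule L.main_local[OF assms(1) iso small])
qed

end
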